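(* (The push-forward formula for a product.) For all $f,g\in S$ and $u\in W$, the following identity holds in $Z$: \[ \pi\bullet\big(c(f)\cdot c(g)\big)=\sum_{w,v\in W}Y_{I_w}(f)\cdot u\big(Y_{I_v}(g)\big)\cdot\Big(\pi\bullet\big(\zeta^\vee_{I_w}\cdot\zeta(u)^\vee_{I_v}\big)\Big). \]
   Context: Setting: $\Phi$ a finite real root system (simple roots $\Pi$, positive/negative roots $\Phi_\pm$, Coxeter group $W$), $\mathcal O$ its coefficient ring, $\Lambda$ a free $\mathcal O$-module between root and weight lattices; $F$ a one-dimensional commutative formal group law over a commutative ring $R$; $S$ the formal group ring ($R[[x_\lambda]]_{\lambda\in\Lambda}$ modulo the closure of $x_0=0$, $x_{\lambda+\mu}=F(x_\lambda,x_\mu)$; no completion if $F$ polynomial; non-crystallographic case: $F$ additive, $R=\mathcal O$, $S=\mathrm{Sym}_{\mathcal O}\Lambda$), $W$ acting by $w(x_\lambda)=x_{w(\lambda)}$. Assume all $x_\alpha$ regular and $x_\alpha\mid x_{\alpha'}f\Rightarrow x_\alpha\mid f$ for distinct positive $\alpha,\alpha'$. $Q=S[1/x_\alpha]$; $Q_W$ twisted group algebra (basis $\delta_w$, $\delta_wq=w(q)\delta_w$) acting on $Q$ by $q\delta_w(f)=qw(f)$; $Y_\alpha=\frac1{x_{-\alpha}}+\frac1{x_\alpha}\delta_{s_\alpha}$ (so $Y_\alpha(f)=\frac f{x_{-\alpha}}+\frac{s_\alpha f}{x_\alpha}$), $Y_i=Y_{\alpha_i}$; fixed reduced words $I_w$,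 $Y_{I_w}$ the product, $I_w^{-1}$ reversed. $\mathbb D\subset Q_W$ generated by $S$ and the $Y_i$, free over $S$ on $\{Y_{I_w}\}$. $Z=\{(z_v)_v\in\bigoplus_{v\in W}S:z_{s_\alpha w}-z_w\in x_\alpha S\}$ (coordinatewise product), identified with $\mathrm{Hom}_S(\mathbb D,S)$ via $\phi\mapsto(\phi(\delta_v))_v$; Hecke action $q\delta_w\bullet(z_v)=(v(q)z_{vw})$, Weyl action $q\delta_w\odot(z_v)=(qw(z_{w^{-1}v}))$; $c(f)=(v(f))_v$. $x_\Pi=\prod_{\alpha\in\Phi_-}x_\alpha$; $\pi=\sum_w\frac1{w(x_\Pi)}\delta_w$ acting on $Z$ by $\bullet$. $\zeta^\vee_{I_w}\in Z$ corresponds to the functional on $\mathbb D$ with $Y_{I_u}\mapsto\delta^{Kr}_{w,u}$; $\zeta(u)^\vee_{I_w}=\delta_u\odot\zeta^\vee_{I_w}$. *)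

theory Defs
  imports "HOL-Analysis.Analysis"
begin

definition refl :: "'v::euclidean_space \<Rightarrow> 'v \<Rightarrow> 'v" where
  "refl \<alpha> v = v - (2 * (v \<bullet> \<alpha>) / (\<alpha> \<bullet> \<alpha>)) *\<^sub>R \<alpha>"

definition root_system :: "'v::euclidean_space set \<Rightarrow> bool" where
  "root_system \<Phi> \<longleftrightarrow> finite \<Phi> \<and> 0 \<notin> \<Phi> \<and>
     (\<forall>\<alpha>\<in>\<Phi>. refl \<alpha> ` \<Phi> = \<Phi>) \<and>
     (\<forall>\<alpha>\<in>\<Phi>. \<forall>c::real. c *\<^sub>R \<alpha> \<in> \<Phi> \<longleftrightarrow> c = 1 \<or> c = -1)"

definition positive_system :: "'v::euclidean_space set \<Rightarrow> 'v set \<Rightarrow> bool" where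
  "positive_system \<Phi> Pos \<longleftrightarrow>
     (\<exists>t. (\<forall>\<alpha>\<in>\<Phi>. \<alpha> \<bullet> t \<noteq> 0) \<and> Pos = {\<alpha>\<in>\<Phi>. \<alpha> \<bullet> t > 0})"

definition simple_roots :: "'v::euclidean_space set \<Rightarrow> 'v set" where
  "simple_roots Pos = {\<alpha>\<in>Pos. \<not> (\<exists>c. (\<forall>\<beta>\<in>Pos - {\<alpha>}. c \<beta> \<ge> (0::real)) \<and>
                                    \<alpha> = (\<Sum>\<beta>\<in>Pos - {\<alpha>}. c \<beta> *\<^sub>R \<beta>))}"

inductive_set coxeter_group :: "'v::euclidean_space set \<Rightarrow> ('v \<Rightarrow> 'v) set" for \<Phi> where
  cg_id: "id \<in> coxeter_group \<Phi>"
| cg_refl: "w \<in> coxeter_group \<Phi> \<Longrightarrow> \<alpha> \<in> \<Phi> \<Longrightarrow> refl \<alpha> \<circ> w \<in> coxeter_group \<Phi>"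

definition word_elem :: "'v::euclidean_space list \<Rightarrow> 'v \<Rightarrow> 'v" where
  "word_elem l = foldr (\<lambda>\<alpha> acc. refl \<alpha> \<circ> acc) l id"

definition reduced_words ::
  "('v \<Rightarrow> 'v) set \<Rightarrow> 'v::euclidean_space set \<Rightarrow> (('v \<Rightarrow> 'v) \<Rightarrow> 'v list) \<Rightarrow> bool" where
  "reduced_words W Simp I \<longleftrightarrow>
     (\<forall>w\<in>W. set (I w) \<subseteq> Simp \<and> word_elem (I w) = w \<and>
        (\<forall>l. set l \<subseteq> Simp \<and> word_elem l = w \<longrightarrow> length (I w) \<le> length l))"

definition qinv :: "'a::comm_ring_1 \<Rightarrow> 'a" where
  "qinv a = (THE b. a * b = 1)"

text \<open>Elements of the twisted group algebra Q_W: functions W -> Q (coefficients of the delta_w).\<close>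
definition delta :: "('v \<Rightarrow> 'v) \<Rightarrow> ('v \<Rightarrow> 'v) \<Rightarrow> 'a::comm_ring_1" where
  "delta w = (\<lambda>v. if v = w then 1 else 0)"

text \<open>Product in Q_W: (q delta_a)(q' delta_b) = q a(q') delta_(ab).\<close>
definition tmult :: "('v \<Rightarrow> 'v) set \<Rightarrow> (('v \<Rightarrow> 'v) \<Rightarrow> 'a \<Rightarrow> 'a) \<Rightarrow>
    (('v \<Rightarrow> 'v) \<Rightarrow> 'a::comm_ring_1) \<Rightarrow> (('v \<Rightarrow> 'v) \<Rightarrow> 'a) \<Rightarrow> ('v \<Rightarrow> 'v) \<Rightarrow> 'a" where
  "tmult W act X Y = (\<lambda>w. \<Sum>a\<in>W. \<Sum>b\<in>W. if a \<circ> b = w then X a * act a (Y b) else 0)"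

definition Yalpha :: "('v::euclidean_space \<Rightarrow> 'a::comm_ring_1) \<Rightarrow> 'v \<Rightarrow> ('v \<Rightarrow> 'v) \<Rightarrow> 'a" where
  "Yalpha x \<alpha> = (\<lambda>v. (if v = id then qinv (x (- \<alpha>)) else 0)
                    + (if v = refl \<alpha> then qinv (x \<alpha>) else 0))"

definition Yword :: "('v \<Rightarrow> 'v) set \<Rightarrow> (('v \<Rightarrow> 'v) \<Rightarrow> 'a \<Rightarrow> 'a) \<Rightarrow>
    ('v::euclidean_space \<Rightarrow> 'a::comm_ring_1) \<Rightarrow> 'v list \<Rightarrow> ('v \<Rightarrow> 'v) \<Rightarrow> 'a" where
  "Yword W act x l = foldr (\<lambda>\<alpha> acc. tmult W act (Yalpha x \<alpha>) acc) l (delta id)"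

definition app_op :: "('v \<Rightarrow> 'v) set \<Rightarrow> (('v \<Rightarrow> 'v) \<Rightarrow> 'a \<Rightarrow> 'a) \<Rightarrow>
    (('v \<Rightarrow> 'v) \<Rightarrow> 'a::comm_ring_1) \<Rightarrow> 'a \<Rightarrow> 'a" where
  "app_op W act X f = (\<Sum>w\<in>W. X w * act w f)"

definition cvec :: "('v \<Rightarrow> 'v) set \<Rightarrow> (('v \<Rightarrow> 'v) \<Rightarrow> 'a \<Rightarrow> 'a) \<Rightarrow> 'a::comm_ring_1 \<Rightarrow> ('v \<Rightarrow> 'v) \<Rightarrow> 'a" where
  "cvec W act f = (\<lambda>v. if v \<in> W then act v f else 0)"

definition hecke :: "('v \<Rightarrow> 'v) set \<Rightarrow> (('v \<Rightarrow> 'v) \<Rightarrow> 'a \<Rightarrow> 'a) \<Rightarrow>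
    (('v \<Rightarrow> 'v) \<Rightarrow> 'a::comm_ring_1) \<Rightarrow> (('v \<Rightarrow> 'v) \<Rightarrow> 'a) \<Rightarrow> ('v \<Rightarrow> 'v) \<Rightarrow> 'a" where
  "hecke W act X z = (\<lambda>v. if v \<in> W then (\<Sum>w\<in>W. act v (X w) * z (v \<circ> w)) else 0)"

definition weyl :: "('v \<Rightarrow> 'v) set \<Rightarrow> (('v \<Rightarrow> 'v) \<Rightarrow> 'a \<Rightarrow> 'a) \<Rightarrow>
    (('v \<Rightarrow> 'v) \<Rightarrow> 'a::comm_ring_1) \<Rightarrow> (('v \<Rightarrow> 'v) \<Rightarrow> 'a) \<Rightarrow> ('v \<Rightarrow> 'v) \<Rightarrow> 'a" where
  "weyl W act X z = (\<lambda>v. if v \<in> W then (\<Sum>w\<in>W. X w * act w (z (inv w \<circ> v))) else 0)"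

text \<open>pi = sum_w 1/w(x_Pi) delta_w, x_Pi = product of x_alpha over the negative roots.\<close>
definition piel :: "(('v \<Rightarrow> 'v) \<Rightarrow> 'a \<Rightarrow> 'a) \<Rightarrow> ('v \<Rightarrow> 'a::comm_ring_1) \<Rightarrow> 'v set \<Rightarrow> ('v \<Rightarrow> 'v) \<Rightarrow> 'a" where
  "piel act x Neg = (\<lambda>w. qinv (act w (\<Prod>\<alpha>\<in>Neg. x \<alpha>)))"

text \<open>zeta-dual_(I_w): the vector (phi(delta_v))_v of the functional phi with
  phi(Y_(I_u)) = Kronecker delta (w,u); phi is extended Q-linearly, so
  phi(Y_(I_u)) = sum_v (coefficient of delta_v in Y_(I_u)) * phi(delta_v).\<close>
definition zeta :: "('v \<Rightarrow> 'v) set \<Rightarrow> (('v \<Rightarrow> 'v) \<Rightarrow> 'a \<Rightarrow> 'a) \<Rightarrow>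
    ('v::euclidean_space \<Rightarrow> 'a::comm_ring_1) \<Rightarrow> (('v \<Rightarrow> 'v) \<Rightarrow> 'v list) \<Rightarrow> ('v \<Rightarrow> 'v)
    \<Rightarrow> ('v \<Rightarrow> 'v) \<Rightarrow> 'a" where
  "zeta W act x I w = (THE z. (\<forall>v. v \<notin> W \<longrightarrow> z v = 0) \<and>
      (\<forall>u\<in>W. (\<Sum>v\<in>W. Yword W act x (I u) v * z v) = (if u = w then 1 else 0)))"

end

theory Submission
  imports Defs
begin


lemma refl_refl: fixes a :: "'v::euclidean_space" assumes "a \<noteq> 0" shows "refl a (refl a v) = v"
proof -
  have aa: "a \<bullet> a \<noteq> 0" using assms by simp
  show ?thesis unfolding refl_def using aa
    by (simp add: inner_diff_left algebra_simps scaleR_diff_left)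
qed

lemma refl_comp_self: fixes a :: "'v::euclidean_space" assumes "a \<noteq> 0" shows "refl a \<circ> refl a = id"
  using refl_refl[OF assms] by (auto simp: fun_eq_iff)

lemma refl_neq_id: fixes a :: "'v::euclidean_space" assumes "a \<noteq> 0" shows "refl a \<noteq> id"
proof
  assume "refl a = id"
  hence "refl a a = a" by simp
  moreover have "refl a a = - a"
  proof -
    have "2 * (a \<bullet> a) / (a \<bullet> a) = 2" using assms by simp
    thus ?thesis unfolding refl_def by (simp add: scaleR_2)
  qed
  ultimately have "a + a = 0" by (metis add.right_inverse)
  hence "(2::real) *\<^sub>R a = 0" by (simp add: scaleR_2)
  thus False using assms by simp
qed

lemma linear_refl: "linear (refl (a::'v::euclidean_space))"
  unfolding refl_def by (rule linearI) (simp_all add: inner_add_left inner_scaleR_left algebra_simps add_divide_distrib scaleR_add_left)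

lemma cg_comp: "w1 \<in> coxeter_group P \<Longrightarrow> w2 \<in> coxeter_group P \<Longrightarrow> w1 \<circ> w2 \<in> coxeter_group P"
  by (induction w1 rule: coxeter_group.induct) (auto simp: comp_assoc intro: coxeter_group.intros)

lemma cg_refl_in: "\<alpha> \<in> P \<Longrightarrow> refl \<alpha> \<in> coxeter_group P"
  using coxeter_group.cg_refl[OF coxeter_group.cg_id] by simp

lemma cg_word: "set l \<subseteq> P \<Longrightarrow> word_elem l \<in> coxeter_group P"
  by (induction l) (auto simp: word_elem_def intro: coxeter_group.intros)

lemma word_elem_Cons: "word_elem (a # l) = refl a \<circ> word_elem l"
  by (simp add: word_elem_def)

lemma cg_inv: assumes "w \<in> coxeter_group P" "0 \<notin> P"
  shows "\<exists>w'\<in>coxeter_group P. w' \<circ> w = id \<and> w \<circ> w' = id"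
  using assms
proof (induction w rule: coxeter_group.induct)
  case cg_id show ?case by (rule bexI[of _ id]) (simp_all add: coxeter_group.cg_id)
next
  case (cg_refl w \<alpha>)
  then obtain w' where w': "w' \<in> coxeter_group P" "w' \<circ> w = id" "w \<circ> w' = id" by blast
  have a0: "\<alpha> \<noteq> 0" using cg_refl by auto
  have "w' \<circ> refl \<alpha> \<in> coxeter_group P" using cg_comp[OF w'(1) cg_refl_in[OF cg_refl(2)]] .
  moreover have "(w' \<circ> refl \<alpha>) \<circ> (refl \<alpha> \<circ> w) = id"
    by (metis comp_assoc comp_id refl_comp_self[OF a0] w'(2))
  moreover have "(refl \<alpha> \<circ> w) \<circ> (w' \<circ> refl \<alpha>) = id"
    by (metis comp_assoc comp_id refl_comp_self[OF a0] w'(3))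
  ultimately show ?case by blast
qed

lemma cg_linear: "w \<in> coxeter_group P \<Longrightarrow> linear w"
proof (induction w rule: coxeter_group.induct)
  case cg_id show ?case by (rule linearI) auto
next
  case (cg_refl w \<alpha>) show ?case using linear_compose[OF cg_refl.IH linear_refl] .
qed

lemma cg_orth: "w \<in> coxeter_group P \<Longrightarrow> (\<forall>\<beta>\<in>P. q \<bullet> \<beta> = 0) \<Longrightarrow> w q = q"
  by (induction w rule: coxeter_group.induct) (auto simp: refl_def)

lemma cg_perm: "w \<in> coxeter_group P \<Longrightarrow> (\<forall>\<alpha>\<in>P. refl \<alpha> ` P = P) \<Longrightarrow> w ` P \<subseteq> P"
  by (induction w rule: coxeter_group.induct) (auto simp: image_comp[symmetric])

lemma cg_finite: fixes P :: "'v::euclidean_space set"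
  assumes "finite P" "\<forall>\<alpha>\<in>P. refl \<alpha> ` P = P" shows "finite (coxeter_group P)"
proof -
  have inj: "inj_on (\<lambda>w. restrict w P) (coxeter_group P)"
  proof (rule inj_onI)
    fix w1 w2 assume w: "w1 \<in> coxeter_group P" "w2 \<in> coxeter_group P" "restrict w1 P = restrict w2 P"
    have eqP: "\<And>b. b \<in> P \<Longrightarrow> w1 b = w2 b" using w(3) by (metis restrict_apply')
    show "w1 = w2"
    proof
      fix v
      obtain y z where yz: "y \<in> span P" "\<And>w. w \<in> span P \<Longrightarrow> orthogonal z w" "v = y + z"
        using orthogonal_subspace_decomp_exists by blast
      have zo: "\<forall>\<beta>\<in>P. z \<bullet> \<beta> = 0" using yz(2) span_base orthogonal_def by blast
      have "w1 y = w2 y" using linear_eq_on_span[OF cg_linear[OF w(1)] cg_linear[OF w(2)] eqP yz(1)] .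
      moreover have "w1 z = z" "w2 z = z" using cg_orth w(1,2) zo by auto
      ultimately show "w1 v = w2 v" using yz(3) linear_add[OF cg_linear[OF w(1)]] linear_add[OF cg_linear[OF w(2)]]
        by simp
    qed
  qed
  have "(\<lambda>w. restrict w P) ` coxeter_group P \<subseteq> (\<Pi>\<^sub>E i\<in>P. P)"
  proof
    fix f assume "f \<in> (\<lambda>w. restrict w P) ` coxeter_group P"
    then obtain w where "w \<in> coxeter_group P" "f = restrict w P" by blast
    with cg_perm[OF this(1) assms(2)] show "f \<in> (\<Pi>\<^sub>E i\<in>P. P)" by auto
  qed
  moreover have "finite (\<Pi>\<^sub>E i\<in>P. P)" by (rule finite_PiE) (use assms in auto)
  ultimately show ?thesis using finite_imageD[OF _ inj] finite_subset by blast
qed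



lemma qinv_unit: fixes a :: "'a::comm_ring_1" assumes "a * b = 1" shows "a * qinv a = 1" "qinv a = b"
proof -
  have "\<exists>!c. a * c = 1"
  proof
    show "a * b = 1" by fact
    fix c assume "a * c = 1"
    hence "b * (a * c) = b" by simp
    thus "c = b" using assms by (simp add: mult.assoc[symmetric] mult.commute)
  qed
  hence "a * qinv a = 1" unfolding qinv_def by (rule theI')
  thus "a * qinv a = 1" .
  from \<open>\<exists>!c. a * c = 1\<close> \<open>a * qinv a = 1\<close> assms show "qinv a = b" by blast
qed

lemma tri_unique:
  fixes M :: "'w \<Rightarrow> 'w \<Rightarrow> 'a::comm_ring_1" and len :: "'w \<Rightarrow> nat"
  assumes fin: "finite W"
    and tri: "\<forall>u\<in>W. \<forall>v\<in>W. M u v \<noteq> 0 \<longrightarrow> v = u \<or> len v < len u"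
    and unit: "\<forall>u\<in>W. \<exists>b. M u u * b = 1"
    and z: "\<forall>u\<in>W. (\<Sum>v\<in>W. M u v * z v) = 0"
  shows "\<forall>u\<in>W. z u = 0"
proof -
  have "\<And>n u. u \<in> W \<Longrightarrow> len u = n \<Longrightarrow> z u = 0"
  proof -
    fix n show "\<And>u. u \<in> W \<Longrightarrow> len u = n \<Longrightarrow> z u = 0"
    proof (induction n rule: less_induct)
      case (less n u)
      have rest: "(\<Sum>v\<in>W - {u}. M u v * z v) = 0"
      proof (rule sum.neutral, intro ballI)
        fix v assume v: "v \<in> W - {u}"
        show "M u v * z v = 0"
        proof (cases "M u v = 0")
          case False
          hence "len v < len u" using tri less.prems v by auto
          thus ?thesis using less.IH less.prems v by auto
        qed simp
      qed
      have "0 = (\<Sum>v\<in>W. M u v * z v)" using z less.prems by auto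
      also have "\<dots> = M u u * z u + (\<Sum>v\<in>W - {u}. M u v * z v)"
        using fin less.prems by (simp add: sum.remove)
      finally have "M u u * z u = 0" using rest by simp
      moreover obtain b where "M u u * b = 1" using unit less.prems by blast
      ultimately have "b * (M u u * z u) = z u" by (metis mult.assoc mult.commute mult_1)
      thus "z u = 0" using \<open>M u u * z u = 0\<close> by simp
    qed
  qed
  thus ?thesis by blast
qed

lemma tri_exists:
  fixes M :: "'w \<Rightarrow> 'w \<Rightarrow> 'a::comm_ring_1" and len :: "'w \<Rightarrow> nat"
  assumes fin: "finite W"
    and tri: "\<forall>u\<in>W. \<forall>v\<in>W. M u v \<noteq> 0 \<longrightarrow> v = u \<or> len v < len u"
    and unit: "\<forall>u\<in>W. \<exists>b. M u u * b = 1"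
  shows "\<exists>z. (\<forall>v. v \<notin> W \<longrightarrow> z v = 0) \<and> (\<forall>u\<in>W. (\<Sum>v\<in>W. M u v * z v) = c u)"
proof -
  have P: "\<exists>z. (\<forall>v. (v \<notin> W \<or> len v \<ge> n) \<longrightarrow> z v = 0) \<and> (\<forall>u\<in>W. len u < n \<longrightarrow> (\<Sum>v\<in>W. M u v * z v) = c u)" for n
  proof (induction n)
    case 0 show ?case by (rule exI[of _ "\<lambda>_. 0"]) auto
  next
    case (Suc n)
    then obtain z where z1: "\<forall>v. (v \<notin> W \<or> len v \<ge> n) \<longrightarrow> z v = 0"
      and z2: "\<forall>u\<in>W. len u < n \<longrightarrow> (\<Sum>v\<in>W. M u v * z v) = c u" by blast
    define d where "d v = (if v \<in> W \<and> len v = n then qinv (M v v) * (c v - (\<Sum>v'\<in>W. M v v' * z v')) else 0)" for v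
    define z' where "z' v = z v + d v" for v
    have Mz': "(\<Sum>v\<in>W. M u v * z' v) = (\<Sum>v\<in>W. M u v * z v) + (\<Sum>v\<in>W. M u v * d v)" for u
      unfolding z'_def by (simp add: distrib_left sum.distrib)
    show ?case
    proof (rule exI[of _ z'], intro conjI allI impI ballI)
      fix v assume "v \<notin> W \<or> Suc n \<le> len v"
      thus "z' v = 0" using z1 unfolding z'_def d_def by auto
    next
      fix u assume u: "u \<in> W" "len u < Suc n"
      show "(\<Sum>v\<in>W. M u v * z' v) = c u"
      proof (cases "len u < n")
        case True
        have "(\<Sum>v\<in>W. M u v * d v) = 0"
        proof (rule sum.neutral, intro ballI)
          fix v assume v: "v \<in> W"
          show "M u v * d v = 0"
          proof (cases "len v = n")
            case True
            hence "M u v = 0" using tri u v \<open>len u < n\<close> by fastforce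
            thus ?thesis by simp
          qed (simp add: d_def)
        qed
        thus ?thesis using Mz' z2 u True by simp
      next
        case False
        hence ln: "len u = n" using u by simp
        have rest: "(\<Sum>v\<in>W - {u}. M u v * d v) = 0"
        proof (rule sum.neutral, intro ballI)
          fix v assume v: "v \<in> W - {u}"
          show "M u v * d v = 0"
          proof (cases "len v = n")
            case True
            hence "M u v = 0" using tri u v ln by fastforce
            thus ?thesis by simp
          qed (simp add: d_def)
        qed
        have "(\<Sum>v\<in>W. M u v * d v) = M u u * d u + (\<Sum>v\<in>W - {u}. M u v * d v)"
          using fin u by (simp add: sum.remove)
        also have "\<dots> = M u u * qinv (M u u) * (c u - (\<Sum>v'\<in>W. M u v' * z v'))"
          using rest u ln by (simp add: d_def mult.assoc)
        also have "\<dots> = c u - (\<Sum>v'\<in>W. M u v' * z v')"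
          using unit u qinv_unit(1) by fastforce
        finally show ?thesis using Mz' by simp
      qed
    qed
  qed
  define N where "N = Suc (Max (len ` W))"
  have lt: "\<forall>u\<in>W. len u < N" using fin unfolding N_def by (simp add: le_imp_less_Suc)
  from P[of N] obtain z where "\<forall>v. (v \<notin> W \<or> len v \<ge> N) \<longrightarrow> z v = 0"
      "\<forall>u\<in>W. len u < N \<longrightarrow> (\<Sum>v\<in>W. M u v * z v) = c u" by blast
  thus ?thesis using lt by blast
qed



lemma tmult_Yalpha:
  fixes x :: "'v::euclidean_space \<Rightarrow> 'a::comm_ring_1"
  assumes fin: "finite (coxeter_group P)" and a: "\<alpha> \<in> P" "0 \<notin> P" and w: "w \<in> coxeter_group P"
    and aid: "\<forall>a. act id a = a"
  shows "tmult (coxeter_group P) act (Yalpha x \<alpha>) Y w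
       = qinv (x (- \<alpha>)) * Y w + qinv (x \<alpha>) * act (refl \<alpha>) (Y (refl \<alpha> \<circ> w))"
proof -
  let ?W = "coxeter_group P"
  let ?s = "refl \<alpha>"
  have a0: "\<alpha> \<noteq> 0" using a by auto
  have sW: "?s \<in> ?W" using cg_refl_in[OF a(1)] .
  have idW: "id \<in> ?W" by (rule coxeter_group.cg_id)
  have sid: "?s \<noteq> id" using refl_neq_id[OF a0] .
  define G where "G c = (\<Sum>b\<in>?W. if c \<circ> b = w then act c (Y b) else 0)" for c
  have "tmult ?W act (Yalpha x \<alpha>) Y w = (\<Sum>c\<in>?W. Yalpha x \<alpha> c * G c)"
    unfolding tmult_def G_def sum_distrib_left by (intro sum.cong refl) (simp add: if_distrib)
  also have "\<dots> = (\<Sum>c\<in>?W. (if c = id then qinv (x (- \<alpha>)) * G c else 0) + (if c = ?s then qinv (x \<alpha>) * G c else 0))"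
    unfolding Yalpha_def by (intro sum.cong refl) (simp add: distrib_right)
  also have "\<dots> = qinv (x (- \<alpha>)) * G id + qinv (x \<alpha>) * G ?s"
    using fin idW sW by (simp add: sum.distrib)
  also have "G id = Y w" unfolding G_def using fin w aid by simp
  also have "G ?s = act ?s (Y (?s \<circ> w))"
  proof -
    have eq: "(?s \<circ> b = w) = (b = ?s \<circ> w)" for b
      using refl_comp_self[OF a0] by (metis comp_assoc comp_id id_comp)
    have "?s \<circ> w \<in> ?W" using cg_comp[OF sW w] .
    thus ?thesis unfolding G_def eq using fin by simp
  qed
  finally show ?thesis .
qed

lemma Yword_Cons: "Yword W act x (a # l) = tmult W act (Yalpha x a) (Yword W act x l)"
  by (simp add: Yword_def)

lemma Yword_supp:
  fixes x :: "'v::euclidean_space \<Rightarrow> 'a::comm_ring_1"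
  assumes fin: "finite (coxeter_group P)" and P0: "0 \<notin> P"
    and aid: "\<forall>a. act id a = a" and a0: "\<forall>w\<in>coxeter_group P. act w 0 = 0"
  shows "set l \<subseteq> P \<Longrightarrow> w \<in> coxeter_group P \<Longrightarrow> Yword (coxeter_group P) act x l w \<noteq> 0 \<Longrightarrow>
    \<exists>l'. set l' \<subseteq> set l \<and> length l' \<le> length l \<and> word_elem l' = w \<and> (length l' = length l \<longrightarrow> l' = l)"
proof (induction l arbitrary: w)
  case Nil
  hence "w = id" by (simp add: Yword_def delta_def split: if_splits)
  thus ?case by (intro exI[of _ "[]"]) (simp add: word_elem_def)
next
  case (Cons \<alpha> l)
  let ?W = "coxeter_group P"
  let ?s = "refl \<alpha>"
  have aP: "\<alpha> \<in> P" using Cons.prems by auto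
  have an0: "\<alpha> \<noteq> 0" using aP P0 by auto
  have lP: "set l \<subseteq> P" using Cons.prems by auto
  have sw: "?s \<circ> w \<in> ?W" using cg_comp[OF cg_refl_in[OF aP] Cons.prems(2)] .
  have eq: "Yword ?W act x (\<alpha> # l) w = qinv (x (- \<alpha>)) * Yword ?W act x l w + qinv (x \<alpha>) * act ?s (Yword ?W act x l (?s \<circ> w))"
    unfolding Yword_Cons by (rule tmult_Yalpha[where act=act and x=x, OF fin aP P0 Cons.prems(2) aid])
  show ?case
  proof (cases "Yword ?W act x l w = 0")
    case False
    from Cons.IH[OF lP Cons.prems(2) False] obtain l' where
      "set l' \<subseteq> set l" "length l' \<le> length l" "word_elem l' = w" by blast
    thus ?thesis by (intro exI[of _ l']) auto
  next
    case True
    hence "Yword ?W act x l (?s \<circ> w) \<noteq> 0" using Cons.prems(3) eq a0 cg_refl_in[OF aP] by auto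
    from Cons.IH[OF lP sw this] obtain l' where l':
      "set l' \<subseteq> set l" "length l' \<le> length l" "word_elem l' = ?s \<circ> w" "length l' = length l \<longrightarrow> l' = l" by blast
    have "word_elem (\<alpha> # l') = w" using l'(3) refl_comp_self[OF an0]
      by (simp add: word_elem_Cons comp_assoc[symmetric])
    thus ?thesis using l' by (intro exI[of _ "\<alpha> # l'"]) auto
  qed
qed

definition Red :: "'v::euclidean_space list \<Rightarrow> bool" where
  "Red l \<longleftrightarrow> (\<forall>l'. set l' \<subseteq> set l \<longrightarrow> length l' < length l \<longrightarrow> word_elem l' \<noteq> word_elem l)"

lemma Red_Cons: "Red (a # l) \<Longrightarrow> Red l"
  unfolding Red_def
proof (intro allI impI)
  fix l' assume H: "\<forall>l'. set l' \<subseteq> set (a # l) \<longrightarrow> length l' < length (a # l) \<longrightarrow> word_elem l' \<noteq> word_elem (a # l)"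
    and "set l' \<subseteq> set l" "length l' < length l"
  moreover have "set (a # l') \<subseteq> set (a # l)" using \<open>set l' \<subseteq> set l\<close> by auto
  moreover have "length (a # l') < length (a # l)" using \<open>length l' < length l\<close> by simp
  ultimately have "word_elem (a # l') \<noteq> word_elem (a # l)" by blast
  thus "word_elem l' \<noteq> word_elem l" by (auto simp: word_elem_Cons)
qed

lemma Yword_diag:
  fixes x :: "'v::euclidean_space \<Rightarrow> 'a::comm_ring_1"
  assumes fin: "finite (coxeter_group P)" and P0: "0 \<notin> P"
    and aid: "\<forall>a. act id a = a" and a0: "\<forall>w\<in>coxeter_group P. act w 0 = 0"
    and amul: "\<forall>w\<in>coxeter_group P. \<forall>a b. act w (a * b) = act w a * act w b"
    and a1: "\<forall>w\<in>coxeter_group P. act w 1 = 1"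
    and Qunit: "\<forall>\<alpha>\<in>P. \<exists>b. x \<alpha> * b = 1"
  shows "set l \<subseteq> P \<Longrightarrow> Red l \<Longrightarrow> \<exists>b. Yword (coxeter_group P) act x l (word_elem l) * b = 1"
proof (induction l)
  case Nil
  thus ?case by (intro exI[of _ 1]) (simp add: Yword_def delta_def word_elem_def id_def)
next
  case (Cons \<alpha> l)
  let ?W = "coxeter_group P"
  let ?s = "refl \<alpha>"
  let ?e = "word_elem l"
  have aP: "\<alpha> \<in> P" using Cons.prems by auto
  have an0: "\<alpha> \<noteq> 0" using aP P0 by auto
  have lP: "set l \<subseteq> P" using Cons.prems by auto
  have sW: "?s \<in> ?W" using cg_refl_in[OF aP] .
  have eW: "?e \<in> ?W" using cg_word[OF lP] .
  have w: "word_elem (\<alpha> # l) = ?s \<circ> ?e" by (simp add: word_elem_Cons)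
  have wW: "?s \<circ> ?e \<in> ?W" using cg_comp[OF sW eW] .
  have ss: "?s \<circ> (?s \<circ> ?e) = ?e" using refl_comp_self[OF an0] by (simp add: comp_assoc[symmetric])
  have eq: "Yword ?W act x (\<alpha> # l) (?s \<circ> ?e) = qinv (x (- \<alpha>)) * Yword ?W act x l (?s \<circ> ?e) + qinv (x \<alpha>) * act ?s (Yword ?W act x l ?e)"
    unfolding Yword_Cons using tmult_Yalpha[where act=act and x=x, OF fin aP P0 wW aid] ss by simp
  have z: "Yword ?W act x l (?s \<circ> ?e) = 0"
  proof (rule ccontr)
    assume "Yword ?W act x l (?s \<circ> ?e) \<noteq> 0"
    from Yword_supp[OF fin P0 aid a0 lP wW this] obtain l' where
      "set l' \<subseteq> set l" "length l' \<le> length l" "word_elem l' = ?s \<circ> ?e" by blast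
    moreover have "set l' \<subseteq> set (\<alpha> # l)" using \<open>set l' \<subseteq> set l\<close> by auto
    moreover have "length l' < length (\<alpha> # l)" using \<open>length l' \<le> length l\<close> by simp
    ultimately show False using Cons.prems(2) w unfolding Red_def by metis
  qed
  obtain b where b: "Yword ?W act x l ?e * b = 1" using Cons.IH lP Red_Cons[OF Cons.prems(2)] by blast
  obtain c where c: "x \<alpha> * c = 1" using Qunit aP by blast
  have "qinv (x \<alpha>) = c" using qinv_unit(2)[OF c] .
  hence u1: "qinv (x \<alpha>) * x \<alpha> = 1" using c by (simp add: mult.commute)
  have u2: "act ?s (Yword ?W act x l ?e) * act ?s b = 1" using amul a1 sW b by metis
  have "Yword ?W act x (\<alpha> # l) (word_elem (\<alpha> # l)) * (x \<alpha> * act ?s b) = 1"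
  proof -
    have "qinv (x \<alpha>) * act ?s (Yword ?W act x l ?e) * (x \<alpha> * act ?s b)
        = (qinv (x \<alpha>) * x \<alpha>) * (act ?s (Yword ?W act x l ?e) * act ?s b)" by (simp add: ac_simps)
    thus ?thesis unfolding w eq z using u1 u2 by simp
  qed
  thus ?case by blast
qed



theorem theorem4p4:
  fixes \<Phi> Pos \<Lambda> :: "'v::euclidean_space set"
    and x :: "'v \<Rightarrow> 'a::comm_ring_1"
    and S :: "'a set"
    and act :: "('v \<Rightarrow> 'v) \<Rightarrow> 'a \<Rightarrow> 'a"
    and I :: "('v \<Rightarrow> 'v) \<Rightarrow> 'v list"
    and f g :: 'a
    and u :: "'v \<Rightarrow> 'v"
  defines "W \<equiv> coxeter_group \<Phi>"
  assumes rs: "root_system \<Phi>"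
    and pos: "positive_system \<Phi> Pos"
    and lat: "\<Phi> \<subseteq> \<Lambda>" "0 \<in> \<Lambda>" "\<forall>a\<in>\<Lambda>. \<forall>b\<in>\<Lambda>. a + b \<in> \<Lambda> \<and> - a \<in> \<Lambda>"
             "\<forall>w\<in>W. w ` \<Lambda> \<subseteq> \<Lambda>"
    and Ssub: "0 \<in> S" "1 \<in> S" "\<forall>a\<in>S. \<forall>b\<in>S. a + b \<in> S \<and> a * b \<in> S \<and> - a \<in> S"
    and xS: "\<forall>l\<in>\<Lambda>. x l \<in> S" "x 0 = 0"
    and xreg: "\<forall>\<alpha>\<in>\<Phi>. \<forall>s\<in>S. x \<alpha> * s = 0 \<longrightarrow> s = 0"
    and xdiv: "\<forall>\<alpha>\<in>Pos. \<forall>\<alpha>'\<in>Pos. \<forall>s\<in>S. \<alpha> \<noteq> \<alpha>' \<longrightarrow>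
                 (\<exists>h\<in>S. x \<alpha>' * s = x \<alpha> * h) \<longrightarrow> (\<exists>h\<in>S. s = x \<alpha> * h)"
    and Qunit: "\<forall>\<alpha>\<in>\<Phi>. \<exists>b. x \<alpha> * b = 1"
    and Qloc: "\<forall>q. \<exists>s\<in>S. \<exists>n. q * (\<Prod>\<alpha>\<in>\<Phi>. x \<alpha>) ^ n = s"
    and act_hom: "\<forall>w\<in>W. \<forall>a b. act w (a + b) = act w a + act w b \<and> act w (a * b) = act w a * act w b"
                 "\<forall>w\<in>W. act w 1 = 1"
    and act_grp: "\<forall>a. act id a = a" "\<forall>v\<in>W. \<forall>w\<in>W. \<forall>a. act (v \<circ> w) a = act v (act w a)"
    and act_x: "\<forall>w\<in>W. \<forall>l\<in>\<Lambda>. act w (x l) = x (w l)"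
    and act_S: "\<forall>w\<in>W. act w ` S \<subseteq> S"
    and red: "reduced_words W (simple_roots Pos) I"
    and fS: "f \<in> S" and gS: "g \<in> S" and uW: "u \<in> W"
  shows "hecke W act (piel act x (\<Phi> - Pos)) (\<lambda>v. cvec W act f v * cvec W act g v)
       = (\<lambda>y. \<Sum>w\<in>W. \<Sum>v\<in>W.
            app_op W act (Yword W act x (I w)) f * act u (app_op W act (Yword W act x (I v)) g)
            * hecke W act (piel act x (\<Phi> - Pos))
                (\<lambda>t. zeta W act x I w t * weyl W act (delta u) (zeta W act x I v) t) y)"
proof -
  have finPhi: "finite \<Phi>" and P0: "0 \<notin> \<Phi>" and reflP: "\<forall>\<alpha>\<in>\<Phi>. refl \<alpha> ` \<Phi> = \<Phi>"
    using rs unfolding root_system_def by auto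
  have fin: "finite W" unfolding W_def by (rule cg_finite[OF finPhi reflP])
  have PosP: "Pos \<subseteq> \<Phi>" using pos unfolding positive_system_def by auto
  have SimpP: "simple_roots Pos \<subseteq> \<Phi>" using PosP unfolding simple_roots_def by auto
  have a0: "\<forall>w\<in>W. act w 0 = 0"
  proof
    fix w assume "w \<in> W"
    hence "act w (0 + 0) = act w 0 + act w 0" using act_hom(1) by blast
    thus "act w 0 = 0" by simp
  qed
  have amul: "\<forall>w\<in>W. \<forall>a b. act w (a * b) = act w a * act w b" using act_hom(1) by blast
  have asum: "act w (sum h A) = (\<Sum>i\<in>A. act w (h i))" if w: "w \<in> W" for w and h :: "('v \<Rightarrow> 'v) \<Rightarrow> 'a" and A
  proof (cases "finite A")
    case True thus ?thesis
      by (induction A rule: finite_induct) (use w a0 act_hom(1) in auto)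
  qed (use w a0 in auto)
  define M where "M u v = Yword W act x (I u) v" for u v
  define len where "len u = length (I u)" for u
  have Iu: "set (I u) \<subseteq> simple_roots Pos" "word_elem (I u) = u"
    "\<And>l. set l \<subseteq> simple_roots Pos \<Longrightarrow> word_elem l = u \<Longrightarrow> length (I u) \<le> length l" if "u \<in> W" for u
    using red that unfolding reduced_words_def by auto
  have IuP: "set (I u) \<subseteq> \<Phi>" if "u \<in> W" for u using Iu(1)[OF that] SimpP by blast
  have tri: "\<forall>u\<in>W. \<forall>v\<in>W. M u v \<noteq> 0 \<longrightarrow> v = u \<or> len v < len u"
  proof (intro ballI impI)
    fix u v assume u: "u \<in> W" and v: "v \<in> W" and ne: "M u v \<noteq> 0"
    from Yword_supp[where act=act and x=x, OF fin[unfolded W_def] P0 act_grp(1) a0[unfolded W_def] IuP[OF u] v[unfolded W_def]] ne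
    obtain l' where l': "set l' \<subseteq> set (I u)" "length l' \<le> length (I u)" "word_elem l' = v"
      "length l' = length (I u) \<longrightarrow> l' = I u"
      unfolding M_def W_def by blast
    show "v = u \<or> len v < len u"
    proof (cases "length l' = length (I u)")
      case True thus ?thesis using l' Iu(2)[OF u] by auto
    next
      case False
      have "length (I v) \<le> length l'" using Iu(3)[OF v] l' Iu(1)[OF u] by blast
      thus ?thesis using False l'(2) unfolding len_def by simp
    qed
  qed
  have unit: "\<forall>u\<in>W. \<exists>b. M u u * b = 1"
  proof
    fix u assume u: "u \<in> W"
    have "Red (I u)" unfolding Red_def
    proof (intro allI impI)
      fix l' assume "set l' \<subseteq> set (I u)" "length l' < length (I u)"
      thus "word_elem l' \<noteq> word_elem (I u)" using Iu[OF u] by fastforce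
    qed
    from Yword_diag[where act=act and x=x, OF fin[unfolded W_def] P0 act_grp(1) a0[unfolded W_def]
        amul[unfolded W_def] act_hom(2)[unfolded W_def] Qunit IuP[OF u] this]
    show "\<exists>b. M u u * b = 1" unfolding M_def W_def using Iu(2)[OF u] by simp
  qed
  define Z where "Z w = zeta W act x I w" for w
  have Zspec: "(\<forall>v. v \<notin> W \<longrightarrow> Z w v = 0) \<and> (\<forall>u\<in>W. (\<Sum>v\<in>W. M u v * Z w v) = (if u = w then 1 else 0))" for w
  proof -
    have ex: "\<exists>!z. (\<forall>v. v \<notin> W \<longrightarrow> z v = 0) \<and> (\<forall>u\<in>W. (\<Sum>v\<in>W. M u v * z v) = (if u = w then 1 else 0))"
    proof (rule ex_ex1I)
      show "\<exists>z. (\<forall>v. v \<notin> W \<longrightarrow> z v = 0) \<and> (\<forall>u\<in>W. (\<Sum>v\<in>W. M u v * z v) = (if u = w then 1 else 0))"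
        by (rule tri_exists[OF fin tri unit])
    next
      fix z1 z2 assume z1: "(\<forall>v. v \<notin> W \<longrightarrow> z1 v = 0) \<and> (\<forall>u\<in>W. (\<Sum>v\<in>W. M u v * z1 v) = (if u = w then 1 else 0))"
        and z2: "(\<forall>v. v \<notin> W \<longrightarrow> z2 v = 0) \<and> (\<forall>u\<in>W. (\<Sum>v\<in>W. M u v * z2 v) = (if u = w then 1 else 0))"
      have "\<forall>u\<in>W. (\<Sum>v\<in>W. M u v * (z1 v - z2 v)) = 0"
        using z1 z2 by (simp add: right_diff_distrib sum_subtractf)
      from tri_unique[OF fin tri unit this] have "\<forall>u\<in>W. z1 u = z2 u" by simp
      thus "z1 = z2" using z1 z2 by (metis ext)
    qed
    show ?thesis unfolding Z_def zeta_def M_def[symmetric] by (rule theI'[OF ex])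
  qed
  have expand: "c t = (\<Sum>w\<in>W. (\<Sum>v\<in>W. M w v * c v) * Z w t)" if t: "t \<in> W" for c :: "('v \<Rightarrow> 'v) \<Rightarrow> 'a" and t
  proof -
    define y where "y t = (\<Sum>w\<in>W. (\<Sum>v\<in>W. M w v * c v) * Z w t)" for t
    have "\<forall>u\<in>W. (\<Sum>v\<in>W. M u v * (c v - y v)) = 0"
    proof
      fix u assume u: "u \<in> W"
      have "(\<Sum>v\<in>W. M u v * y v) = (\<Sum>w\<in>W. (\<Sum>v'\<in>W. M w v' * c v') * (\<Sum>v\<in>W. M u v * Z w v))"
        unfolding y_def sum_distrib_left
        by (subst sum.swap) (simp add: ac_simps)
      also have "\<dots> = (\<Sum>w\<in>W. (\<Sum>v'\<in>W. M w v' * c v') * (if u = w then 1 else 0))"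
        using Zspec u by simp
      also have "\<dots> = (\<Sum>v'\<in>W. M u v' * c v')" using fin u by (simp add: if_distrib cong: if_cong)
      finally show "(\<Sum>v\<in>W. M u v * (c v - y v)) = 0" by (simp add: right_diff_distrib sum_subtractf)
    qed
    from tri_unique[OF fin tri unit this] t show ?thesis unfolding y_def by simp
  qed
  define Yf where "Yf w = app_op W act (Yword W act x (I w)) f" for w
  define Yg where "Yg w = app_op W act (Yword W act x (I w)) g" for w
  have expf: "act t f = (\<Sum>w\<in>W. Yf w * Z w t)" if "t \<in> W" for t
    using expand[of t "\<lambda>v. act v f", OF that] unfolding Yf_def app_op_def M_def .
  obtain u' where u': "u' \<in> W" "u' \<circ> u = id" "u \<circ> u' = id"
    using cg_inv[OF uW[unfolded W_def] P0] unfolding W_def by blast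
  have invu: "inv u = u'" using inv_unique_comp[OF u'(3) u'(2)] .
  have weylZ: "weyl W act (delta u) (Z v) t = act u (Z v (u' \<circ> t))" if t: "t \<in> W" for v t
  proof -
    have e: "\<And>c (a::'a). (if c then 1 else 0) * a = (if c then a else 0)" by simp
    show ?thesis unfolding weyl_def delta_def e using t fin uW invu by simp
  qed
  have expg: "act t g = (\<Sum>v\<in>W. act u (Yg v) * weyl W act (delta u) (Z v) t)" if t: "t \<in> W" for t
  proof -
    have t': "u' \<circ> t \<in> W" using cg_comp[OF u'(1)[unfolded W_def] t[unfolded W_def]] unfolding W_def .
    have "act t g = act u (act (u' \<circ> t) g)"
      using act_grp(2) uW t' u'(3) by (metis comp_assoc id_comp)
    also have "act (u' \<circ> t) g = (\<Sum>v\<in>W. Yg v * Z v (u' \<circ> t))"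
      using expand[of "u' \<circ> t" "\<lambda>v. act v g", OF t'] unfolding Yg_def app_op_def M_def .
    also have "act u \<dots> = (\<Sum>v\<in>W. act u (Yg v) * act u (Z v (u' \<circ> t)))"
      using asum[OF uW] amul uW by simp
    finally show ?thesis using weylZ[OF t] by simp
  qed
  define \<pi> where "\<pi> = piel act x (\<Phi> - Pos)"
  show ?thesis unfolding \<pi>_def[symmetric] Z_def[symmetric] Yf_def[symmetric] Yg_def[symmetric]
  proof
    fix y
    show "hecke W act \<pi> (\<lambda>v. cvec W act f v * cvec W act g v) y =
      (\<Sum>w\<in>W. \<Sum>v\<in>W. Yf w * act u (Yg v) * hecke W act \<pi> (\<lambda>t. Z w t * weyl W act (delta u) (Z v) t) y)"
    proof (cases "y \<in> W")
      case False thus ?thesis unfolding hecke_def by simp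
    next
      case y: True
      have yw: "y \<circ> w' \<in> W" if "w' \<in> W" for w'
        using cg_comp[OF y[unfolded W_def] that[unfolded W_def]] unfolding W_def .
      have "hecke W act \<pi> (\<lambda>v. cvec W act f v * cvec W act g v) y
          = (\<Sum>w'\<in>W. act y (\<pi> w') * ((\<Sum>w\<in>W. Yf w * Z w (y \<circ> w')) * (\<Sum>v\<in>W. act u (Yg v) * weyl W act (delta u) (Z v) (y \<circ> w'))))"
        unfolding hecke_def cvec_def using y yw expf expg by simp
      also have "\<dots> = (\<Sum>w'\<in>W. \<Sum>w\<in>W. \<Sum>v\<in>W. Yf w * act u (Yg v) * (act y (\<pi> w') * (Z w (y \<circ> w') * weyl W act (delta u) (Z v) (y \<circ> w'))))"
        by (simp add: sum_product sum_distrib_left ac_simps) (rule sum.cong[OF refl], rule sum.swap)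
      also have "\<dots> = (\<Sum>w\<in>W. \<Sum>v\<in>W. \<Sum>w'\<in>W. Yf w * act u (Yg v) * (act y (\<pi> w') * (Z w (y \<circ> w') * weyl W act (delta u) (Z v) (y \<circ> w'))))"
        by (subst sum.swap) (subst (2) sum.swap, rule refl)
      also have "\<dots> = (\<Sum>w\<in>W. \<Sum>v\<in>W. Yf w * act u (Yg v) * hecke W act \<pi> (\<lambda>t. Z w t * weyl W act (delta u) (Z v) t) y)"
        unfolding hecke_def using y by (simp add: sum_distrib_left)
      finally show ?thesis .
    qed
  qed
qed


end
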